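(* Let $c_{\min}\le c_{\max}$ and $d_{\min}\le d_{\max}$ be integers, $T=\{c_{\min},\dots,c_{\max}\}\times\{d_{\min},\dots,d_{\max}\}$, $a:T\to[0,1]$ and $p:T\to\mathbb{R}$. For $(c,d),(c',d')\in T$ write $(c,d)\to(c',d')$ for the inequality $p_{c,d}-c\,a_{c,d}\ge p_{c',d'}-c\,a_{c',d'}$. Assume $a$ is monotonic: $a_{c,d}\ge a_{c',d'}$ whenever $c\le c'$ and $d\ge d'$. Suppose that for every $(c,d)\in T$: $(c,d)\to(c+1,d)$ if $c<c_{\max}$; $(c,d)\to(c-1,d)$ if $c>c_{\min}$; $(c,d)\to(c,d-1)$ if $d>d_{\min}$. Then $(c,d)\to(c',d')$ holds for all $(c,d)\in T$ and all $(c',d')\in T$ with $d'\le d$.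
   Context: $a_{c,d}$ is the interim winning probability and $p_{c,d}$ the expected payment of a bidder reporting type $(c,d)$ (forwarding cost $c$, predicted path duration $d$); a bidder of true cost $c$ winning with probability $a$ has expected cost $c\,a$. The inequality $(c,d)\to(c',d')$ is the incentive-compatibility (IC) constraint for a bidder of true type $(c,d)$ misreporting $(c',d')$. In the paper, IC constraints for over-reporting the path duration ($d'>d$) are excluded from consideration by a separate argument, so "all IC constraints" means all constraints $(c,d)\to(c',d')$ with $d'\le d$. *)

theory Defs
  imports Main "HOL.Real"
begin

text \<open>IC constraint (c,d) -> (c',d'): a bidder of true type (c,d) does not gain by reporting (c',d').\<close>
definition IC :: "(int \<Rightarrow> int \<Rightarrow> real) \<Rightarrow> (int \<Rightarrow> int \<Rightarrow> real) \<Rightarrow> int \<Rightarrow> int \<Rightarrow> int \<Rightarrow> int \<Rightarrow> bool" where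
  "IC a p c d c' d' \<longleftrightarrow> p c d - real_of_int c * a c d \<ge> p c' d' - real_of_int c * a c' d'"

end

theory Submission
  imports Defs
begin

theorem theorem1:
  fixes cmin cmax dmin dmax :: int
    and a p :: "int \<Rightarrow> int \<Rightarrow> real"
  defines "T \<equiv> {cmin..cmax} \<times> {dmin..dmax}"
  assumes "cmin \<le> cmax" and "dmin \<le> dmax"
    and a_range: "\<forall>(c, d) \<in> T. 0 \<le> a c d \<and> a c d \<le> 1"
    and mono: "\<forall>(c, d) \<in> T. \<forall>(c', d') \<in> T. c \<le> c' \<and> d \<ge> d' \<longrightarrow> a c d \<ge> a c' d'"
    and up: "\<forall>(c, d) \<in> T. c < cmax \<longrightarrow> IC a p c d (c + 1) d"
    and down: "\<forall>(c, d) \<in> T. c > cmin \<longrightarrow> IC a p c d (c - 1) d"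
    and dur: "\<forall>(c, d) \<in> T. d > dmin \<longrightarrow> IC a p c d c (d - 1)"
  shows "\<forall>(c, d) \<in> T. \<forall>(c', d') \<in> T. d' \<le> d \<longrightarrow> IC a p c d c' d'"
proof -
  have M: "a c d \<ge> a c' d'" if "cmin \<le> c" "c \<le> c'" "c' \<le> cmax" "d' \<le> d" "dmin \<le> d'" "d \<le> dmax" for c d c' d'
    using mono that unfolding T_def by fastforce
  have U: "\<And>c d. cmin \<le> c \<Longrightarrow> c < cmax \<Longrightarrow> dmin \<le> d \<Longrightarrow> d \<le> dmax \<Longrightarrow> IC a p c d (c + 1) d"
    using up unfolding T_def by fastforce
  have D: "\<And>c d. cmin < c \<Longrightarrow> c \<le> cmax \<Longrightarrow> dmin \<le> d \<Longrightarrow> d \<le> dmax \<Longrightarrow> IC a p c d (c - 1) d"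
    using down unfolding T_def by fastforce
  have R: "\<And>c d. cmin \<le> c \<Longrightarrow> c \<le> cmax \<Longrightarrow> dmin < d \<Longrightarrow> d \<le> dmax \<Longrightarrow> IC a p c d c (d - 1)"
    using dur unfolding T_def by fastforce
  have UP: "\<forall>c d. dmin \<le> d \<longrightarrow> d \<le> dmax \<longrightarrow> cmin \<le> c \<longrightarrow> c + int k \<le> cmax \<longrightarrow> IC a p c d (c + int k) d" for k
  proof (induction k)
    case 0 then show ?case by (simp add: IC_def)
  next
    case (Suc k)
    show ?case
    proof (intro allI impI)
      fix c d assume P: "dmin \<le> d" "d \<le> dmax" "cmin \<le> c" "c + int (Suc k) \<le> cmax"
      have h1: "IC a p c d (c + 1) d" using U[of c d] P by simp
      have h2: "IC a p (c+1) d (c + 1 + int k) d" using Suc.IH P by simp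
      have h3: "a (c+1) d \<ge> a (c+1+int k) d" using M[of "c+1" "c+1+int k" d d] P by simp
      show "IC a p c d (c + int (Suc k)) d" using h1 h2 h3 unfolding IC_def by (simp add: algebra_simps)
    qed
  qed
  have DN: "\<forall>c d. dmin \<le> d \<longrightarrow> d \<le> dmax \<longrightarrow> c \<le> cmax \<longrightarrow> cmin \<le> c - int k \<longrightarrow> IC a p c d (c - int k) d" for k
  proof (induction k)
    case 0 then show ?case by (simp add: IC_def)
  next
    case (Suc k)
    show ?case
    proof (intro allI impI)
      fix c d assume P: "dmin \<le> d" "d \<le> dmax" "c \<le> cmax" "cmin \<le> c - int (Suc k)"
      have h1: "IC a p c d (c - 1) d" using D[of c d] P by simp
      have h2: "IC a p (c-1) d (c - 1 - int k) d" using Suc.IH P by simp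
      have h3: "a (c - 1 - int k) d \<ge> a (c-1) d" using M[of "c-1-int k" "c-1" d d] P by simp
      show "IC a p c d (c - int (Suc k)) d" using h1 h2 h3 unfolding IC_def by (simp add: algebra_simps)
    qed
  qed
  have C: "IC a p c d c' d" if "cmin \<le> c" "c \<le> cmax" "cmin \<le> c'" "c' \<le> cmax" "dmin \<le> d" "d \<le> dmax" for c c' d
  proof (cases "c \<le> c'")
    case True
    then obtain k where k: "c' = c + int k" using zle_iff_zadd by blast
    show ?thesis using UP[of k] that k by simp
  next
    case False
    then have "c - c' \<ge> 0" by simp
    then obtain k where k: "c - c' = int k" using nonneg_int_cases by blast
    then have k': "c' = c - int k" by simp
    show ?thesis using DN[of k] that k' by simp
  qed
  have DD: "\<forall>c c' d d'. cmin \<le> c \<longrightarrow> c \<le> cmax \<longrightarrow> cmin \<le> c' \<longrightarrow> c' \<le> cmax \<longrightarrow> d' + int k = d \<longrightarrow> dmin \<le> d' \<longrightarrow> d \<le> dmax \<longrightarrow> IC a p c d c' d'" for k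
  proof (induction k)
    case 0 then show ?case using C by simp
  next
    case (Suc k)
    show ?case
    proof (intro allI impI)
      fix c c' d d' assume P: "cmin \<le> c" "c \<le> cmax" "cmin \<le> c'" "c' \<le> cmax" "d' + int (Suc k) = d" "dmin \<le> d'" "d \<le> dmax"
      have h1: "IC a p c d c (d - 1)" using R[of c d] P by simp
      have h2: "IC a p c (d' + int k) c' d'" using Suc.IH P by simp
      have "d - 1 = d' + int k" using P by simp
      hence h2: "IC a p c (d - 1) c' d'" using h2 by simp
      show "IC a p c d c' d'" using h1 h2 unfolding IC_def by simp
    qed
  qed
  have F: "IC a p c d c' d'" if *: "cmin \<le> c" "c \<le> cmax" "dmin \<le> d" "d \<le> dmax" "cmin \<le> c'" "c' \<le> cmax" "dmin \<le> d'" "d' \<le> dmax" "d' \<le> d" for c d c' d'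
  proof -
    obtain k where k: "d = d' + int k" using zle_iff_zadd *(9) by blast
    show ?thesis using DD[of k] * k by simp
  qed
  show ?thesis unfolding T_def using F by auto
qed

end
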